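(* Let $w\in W^{\mathfrak p}$ and let $\mu$ be a labeling of the points of $P=\{-2n,\dots,-1,1,\dots,2n\}$ by symbols $\uparrow,\downarrow$ which is antisymmetric (the label at $-j$ is the opposite of the label at $j$ for all $j$) and has $\uparrow$ at every point $n+1,\dots,2n$. If every cup of $C(w)$ has one endpoint labeled $\uparrow$ and the other labeled $\downarrow$ by $\mu$, then the number of $j\in\{1,\dots,n\}$ with label $\uparrow$ is even.
   Context: Let $n\ge4$, $W$ the Weyl group of type $D_n$ with simple reflections $s_0,\dots,s_{n-1}$ ($s_0,s_1$ both joined to $s_2$, $s_i$ joined to $s_{i+1}$ for $i\ge2$), $W_{\mathfrak p}=\langle s_1,\dots,s_{n-1}\rangle$, $W^{\mathfrak p}$ the minimal length representatives of $W_{\mathfrak p}\backslash W$. For $w\in W^{\mathfrak p}$ let $(\alpha_1,\dots,\alpha_n)=(+,\dots,+)\cdot w$ for the right action on $\{+,-\}^n$ where $s_i$ ($i\ge1$) swaps entries $i,i+1$ and $s_0$ sends $(a_1,a_2,\dots)$ to $(-a_2,-a_1,\dots)$; set $\alpha_{-i}=-\alpha_i$. Label $P$ by $+$ at $j<-n$, $-$ at $j>n$, $\alpha_j$ at $1\le|j|\le n$. Let $M$ be the unique set of non-intersecting arcs in the lower half plane matching the points of $P$ in pairs, each arc joining a $+$ point to a $-$ point on its right. The arcs of $M$ joining a negative and a positive point are $(-y_1,y_1),\dots,(-y_{2k},y_{2k})$ with $y_1<\dots<y_{2k}$. The cup diagram $C(w)$ is obtained from $M$ by replacing, for each $j$,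 the arcs $(-y_{2j-1},y_{2j-1})$ and $(-y_{2j},y_{2j})$ by the two (linked) arcs joining $-y_{2j}$ to $y_{2j-1}$ and $-y_{2j-1}$ to $y_{2j}$; its arcs are called cups. *)

theory Defs
  imports Main
begin

text \<open>Simple reflection s_i realised as a (finitely supported) signed permutation of int:
 s_0 = reflection in e_1+e_2 : 1 -> -2, 2 -> -1, -1 -> 2, -2 -> 1;
 s_i (i >= 1) swaps i,i+1 and -i,-(i+1).  This is a faithful realisation of W(D_n)
 when the indices are restricted to 0..n-1.\<close>

definition sref :: "nat \<Rightarrow> int \<Rightarrow> int" where
  "sref i = (if i = 0 then
      (\<lambda>x. if x = 1 then -2 else if x = 2 then -1 else if x = -1 then 2
           else if x = -2 then 1 else x)
    else
      (\<lambda>x. if x = int i then int i + 1 else if x = int i + 1 then int i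
           else if x = - int i then - (int i + 1) else if x = - (int i + 1) then - int i
           else x))"

definition welt :: "nat list \<Rightarrow> int \<Rightarrow> int" where
  "welt ws = foldr (\<lambda>i f. sref i \<circ> f) ws id"

definition WD :: "nat \<Rightarrow> (int \<Rightarrow> int) set" where
  "WD n = {welt ws | ws. set ws \<subseteq> {..<n}}"

definition Wpar :: "nat \<Rightarrow> (int \<Rightarrow> int) set" where
  "Wpar n = {welt ws | ws. set ws \<subseteq> {1..<n}}"

definition wlen :: "nat \<Rightarrow> (int \<Rightarrow> int) \<Rightarrow> nat" where
  "wlen n w = (LEAST k. \<exists>ws. set ws \<subseteq> {..<n} \<and> length ws = k \<and> welt ws = w)"

definition Wp_reps :: "nat \<Rightarrow> (int \<Rightarrow> int) set" where
  "Wp_reps n = {w \<in> WD n. \<forall>u \<in> Wpar n. wlen n w \<le> wlen n (u \<circ> w)}"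

text \<open>A sign sequence (a_1,...,a_n) is a list of length n; True = +, False = -.
  Entry a_i is stored at list position i-1.\<close>
definition sact :: "nat \<Rightarrow> bool list \<Rightarrow> bool list" where
  "sact i a = (if i = 0 then (\<not> a ! 1) # (\<not> a ! 0) # drop 2 a
               else a[i - 1 := a ! i, i := a ! (i - 1)])"

definition wact :: "bool list \<Rightarrow> nat list \<Rightarrow> bool list" where
  "wact a ws = foldl (\<lambda>b i. sact i b) a ws"

definition Pset :: "nat \<Rightarrow> int set" where
  "Pset n = {- 2 * int n .. -1} \<union> {1 .. 2 * int n}"

definition plab :: "nat \<Rightarrow> bool list \<Rightarrow> int \<Rightarrow> bool" where
  "plab n a j = (if j < - int n then True else if j > int n then False
                 else if j > 0 then a ! (nat j - 1) else \<not> (a ! (nat (- j) - 1)))"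

text \<open>Arcs are pairs (left endpoint, right endpoint).  A valid M: perfect matching of P by arcs
  joining a + point to a - point on its right, pairwise non-intersecting (not interleaved).\<close>
definition is_M :: "nat \<Rightarrow> bool list \<Rightarrow> (int \<times> int) set \<Rightarrow> bool" where
  "is_M n a M \<longleftrightarrow>
     M \<subseteq> Pset n \<times> Pset n \<and>
     (\<forall>(x, y) \<in> M. x < y \<and> plab n a x \<and> \<not> plab n a y) \<and>
     (\<forall>p \<in> Pset n. card {e \<in> M. fst e = p \<or> snd e = p} = 1) \<and>
     (\<forall>(x, y) \<in> M. \<forall>(u, v) \<in> M. \<not> (x < u \<and> u < y \<and> y < v))"

definition Mdiag :: "nat \<Rightarrow> bool list \<Rightarrow> (int \<times> int) set" where
  "Mdiag n a = (THE M. is_M n a M)"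

definition crossY :: "nat \<Rightarrow> bool list \<Rightarrow> int list" where
  "crossY n a = sorted_list_of_set {y. \<exists>x. (x, y) \<in> Mdiag n a \<and> x < 0 \<and> 0 < y}"

text \<open>Cups of C(w): the arcs (-y_{2j-1},y_{2j-1}), (-y_{2j},y_{2j}) are replaced by
  (-y_{2j}, y_{2j-1}) and (-y_{2j-1}, y_{2j}).  (Lists are 0-indexed: y_{2j-1} = Y!(2j'), y_{2j} = Y!(2j'+1).)\<close>
definition cups :: "nat \<Rightarrow> bool list \<Rightarrow> (int \<times> int) set" where
  "cups n a = (let M = Mdiag n a; Y = crossY n a in
     {(x, y) \<in> M. \<not> (x < 0 \<and> 0 < y)}
     \<union> {(- (Y ! (2 * j + 1)), Y ! (2 * j)) | j. 2 * j + 1 < length Y}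
     \<union> {(- (Y ! (2 * j)), Y ! (2 * j + 1)) | j. 2 * j + 1 < length Y})"

end

theory Submission
  imports Defs "HOL-Library.Multiset"
begin


definition mvalid :: "int set \<Rightarrow> (int \<Rightarrow> bool) \<Rightarrow> (int \<times> int) set \<Rightarrow> bool" where
"mvalid S L M \<longleftrightarrow> M \<subseteq> S \<times> S \<and> (\<forall>(x,y)\<in>M. x<y \<and> L x \<and> \<not> L y)
  \<and> (\<forall>p\<in>S. \<exists>!e. e\<in>M \<and> (fst e = p \<or> snd e = p))
  \<and> (\<forall>(x,y)\<in>M. \<forall>(u,v)\<in>M. \<not>(x<u \<and> u<y \<and> y<v))"

lemma mv_parts:
  assumes "mvalid S L M"
  shows "M \<subseteq> S \<times> S" "\<forall>(x,y)\<in>M. x<y \<and> L x \<and> \<not> L y"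
    "\<forall>p\<in>S. \<exists>!e. e\<in>M \<and> (fst e = p \<or> snd e = p)"
    "\<forall>(x,y)\<in>M. \<forall>(u,v)\<in>M. \<not>(x<u \<and> u<y \<and> y<v)"
  using assms unfolding mvalid_def
  apply -
     apply (erule conjE, assumption)
    apply (erule conjE, erule conjE, assumption)
   apply (erule conjE, erule conjE, erule conjE, assumption)
  apply (erule conjE, erule conjE, erule conjE, assumption)
  done

lemma mv_arc: "mvalid S L M \<Longrightarrow> (x,y)\<in>M \<Longrightarrow> x<y \<and> L x \<and> \<not> L y \<and> x\<in>S \<and> y\<in>S"
proof -
  assume a: "mvalid S L M" "(x,y)\<in>M"
  have "x<y \<and> L x \<and> \<not> L y" using mv_parts(2)[OF a(1)] a(2) by fastforce
  moreover have "(x,y) \<in> S \<times> S" using mv_parts(1)[OF a(1)] a(2) by (rule subsetD)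
  ultimately show ?thesis by simp
qed
lemma mv_nc: "mvalid S L M \<Longrightarrow> (x,y)\<in>M \<Longrightarrow> (u,v)\<in>M \<Longrightarrow> \<not>(x<u \<and> u<y \<and> y<v)"
  using mv_parts(4) by fastforce
lemma mv_ex: "mvalid S L M \<Longrightarrow> p\<in>S \<Longrightarrow> \<exists>u v. (u,v)\<in>M \<and> (u = p \<or> v = p)"
proof -
  assume a: "mvalid S L M" "p\<in>S"
  then have "\<exists>!e. e\<in>M \<and> (fst e = p \<or> snd e = p)" using mv_parts(3)[OF a(1)] by blast
  then obtain e where "e\<in>M \<and> (fst e = p \<or> snd e = p)" by (rule ex1E)
  then show ?thesis by (metis prod.collapse)
qed

lemma mv_uniq:
  assumes "mvalid S L M" "e\<in>M" "e'\<in>M" "fst e = p \<or> snd e = p" "fst e' = p \<or> snd e' = p"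
  shows "e = e'"
proof -
  obtain x y where e: "e = (x,y)" by (cases e)
  have "p \<in> S" using mv_arc[OF assms(1) assms(2)[unfolded e]] assms(4) e by auto
  then have "\<exists>!e. e\<in>M \<and> (fst e = p \<or> snd e = p)" using mv_parts(3)[OF assms(1)] by blast
  then show ?thesis using assms(2-5) by (metis (no_types, lifting))
qed
lemma card1_ex1: "card {e\<in>M. P e} = 1 \<longleftrightarrow> (\<exists>!e. e\<in>M \<and> P e)"
proof
  assume "card {e\<in>M. P e} = 1"
  then obtain e where "{e\<in>M. P e} = {e}" by (auto simp: card_1_singleton_iff)
  then have "\<forall>x. (x\<in>M \<and> P x) \<longleftrightarrow> x = e" by (auto simp: set_eq_iff)
  then show "\<exists>!e. e\<in>M \<and> P e" by (intro ex1I[of _ e]) auto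
next
  assume "\<exists>!e. e\<in>M \<and> P e"
  then obtain e where "{e\<in>M. P e} = {e}" by blast
  then show "card {e\<in>M. P e} = 1" by simp
qed

lemma isM_mvalid: "is_M n a M \<longleftrightarrow> mvalid (Pset n) (plab n a) M"
  by (simp only: is_M_def mvalid_def card1_ex1)

lemma mv_remove:
  assumes mv: "mvalid S L M" and xy: "(x,y)\<in>M"
  shows "mvalid (S-{x,y}) L (M-{(x,y)})"
proof -
  have sub: "u \<notin> {x,y} \<and> v \<notin> {x,y}" if "(u,v) \<in> M" "(u,v) \<noteq> (x,y)" for u v
  proof -
    have "u \<noteq> x"
    proof
      assume h: "u = x"
      have "(u,v) = (x,y)" by (rule mv_uniq[OF mv that(1) xy, of x]) (simp_all add: h)
      with that(2) show False by simp
    qed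
    moreover have "u \<noteq> y"
    proof
      assume h: "u = y"
      have "(u,v) = (x,y)" by (rule mv_uniq[OF mv that(1) xy, of y]) (simp_all add: h)
      with that(2) show False by simp
    qed
    moreover have "v \<noteq> x"
    proof
      assume h: "v = x"
      have "(u,v) = (x,y)" by (rule mv_uniq[OF mv that(1) xy, of x]) (simp_all add: h)
      with that(2) show False by simp
    qed
    moreover have "v \<noteq> y"
    proof
      assume h: "v = y"
      have "(u,v) = (x,y)" by (rule mv_uniq[OF mv that(1) xy, of y]) (simp_all add: h)
      with that(2) show False by simp
    qed
    ultimately show ?thesis by simp
  qed
  have "M - {(x,y)} \<subseteq> (S-{x,y}) \<times> (S-{x,y})"
  proof
    fix e assume e: "e \<in> M - {(x,y)}"
    obtain u v where uv: "e = (u,v)" by (cases e)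
    show "e \<in> (S-{x,y}) \<times> (S-{x,y})" using sub[of u v] e uv mv_arc[OF mv, of u v] by (simp add: mem_Times_iff)
  qed
  moreover have "\<forall>p\<in>S-{x,y}. \<exists>!e. e\<in>M-{(x,y)} \<and> (fst e = p \<or> snd e = p)"
  proof
    fix p assume p: "p \<in> S-{x,y}"
    then have pS: "p \<in> S" by simp
    from mv_parts(3)[OF mv] pS have "\<exists>!e. e\<in>M \<and> (fst e = p \<or> snd e = p)" by (rule bspec)
    then obtain e where e: "e\<in>M \<and> (fst e = p \<or> snd e = p)"
      and u: "\<forall>e'. e'\<in>M \<and> (fst e' = p \<or> snd e' = p) \<longrightarrow> e' = e" by (rule ex1E)
    have ne: "e \<noteq> (x,y)" using e p by auto
    show "\<exists>!e. e\<in>M-{(x,y)} \<and> (fst e = p \<or> snd e = p)"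
    proof (rule ex1I[of _ e])
      show "e\<in>M-{(x,y)} \<and> (fst e = p \<or> snd e = p)" using e ne by simp
    next
      fix e' assume "e'\<in>M-{(x,y)} \<and> (fst e' = p \<or> snd e' = p)"
      then have "e'\<in>M \<and> (fst e' = p \<or> snd e' = p)" by simp
      then show "e' = e" using u by blast
    qed
  qed
  moreover have "\<forall>(u,v)\<in>M-{(x,y)}. u<v \<and> L u \<and> \<not> L v" using mv_parts(2)[OF mv] by (meson DiffD1)
  moreover have "\<forall>(a,b)\<in>M-{(x,y)}. \<forall>(u,v)\<in>M-{(x,y)}. \<not>(a<u \<and> u<b \<and> b<v)"
    using mv_parts(4)[OF mv] by blast
  ultimately show ?thesis unfolding mvalid_def by (intro conjI)
qed

lemma mv_unique:
  "finite S \<Longrightarrow> mvalid S L M1 \<Longrightarrow> mvalid S L M2 \<Longrightarrow> M1 = M2"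
proof (induction "card S" arbitrary: S M1 M2 rule: less_induct)
  case less
  note mv1 = less.prems(2) and mv2 = less.prems(3)
  show ?case
  proof (cases "M1 = {}")
    case True
    have "S = {}"
    proof (rule ccontr)
      assume "S \<noteq> {}" then obtain p where "p \<in> S" by blast
      then show False using mv_ex[OF mv1] True by auto
    qed
    then show ?thesis using True mv_parts(1)[OF mv2] by auto
  next
    case False
    have fin: "finite M1" using less.prems(1) mv_parts(1)[OF mv1]
      by (meson finite_SigmaI finite_subset)
    define f where "f = (\<lambda>e::int\<times>int. snd e - fst e)"
    define m where "m = Min (f ` M1)"
    have "m \<in> f ` M1" unfolding m_def using fin False by simp
    then obtain x y where xy: "(x,y) \<in> M1" "f (x,y) = m" by auto
    have mmin: "f e \<ge> m" if "e \<in> M1" for e unfolding m_def using fin that by simp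
    have xlt: "x < y" "L x" "\<not> L y" "x \<in> S" "y \<in> S" using mv_arc[OF mv1 xy(1)] by auto
    have nobetween: "\<not> (x < z \<and> z < y)" if zS: "z \<in> S" for z
    proof
      assume z: "x < z \<and> z < y"
      obtain u v where e: "(u,v) \<in> M1" "u = z \<or> v = z" using mv_ex[OF mv1 zS] by blast
      have uvl: "u < v" using mv_arc[OF mv1 e(1)] by auto
      have nc1: "\<not>(x<u \<and> u<y \<and> y<v)" and nc2: "\<not>(u<x \<and> x<v \<and> v<y)"
        using mv_nc[OF mv1 xy(1) e(1)] mv_nc[OF mv1 e(1) xy(1)] by auto
      have ne: "(u,v) \<noteq> (x,y)" using z e(2) by auto
      have "u \<noteq> x"
      proof
        assume h: "u = x"
        have "(u,v) = (x,y)" by (rule mv_uniq[OF mv1 e(1) xy(1), of x]) (simp_all add: h)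
        with ne show False by simp
      qed
      moreover have "v \<noteq> y"
      proof
        assume h: "v = y"
        have "(u,v) = (x,y)" by (rule mv_uniq[OF mv1 e(1) xy(1), of y]) (simp_all add: h)
        with ne show False by simp
      qed
      ultimately have "x < u \<and> v < y" using nc1 nc2 z e(2) uvl by auto
      then have "f (u,v) < m" using xy(2) unfolding f_def by auto
      then show False using mmin[OF e(1)] by auto
    qed
    have xy2: "(x,y) \<in> M2"
    proof -
      obtain u v where e: "(u,v) \<in> M2" "u = x \<or> v = x" using mv_ex[OF mv2 xlt(4)] by blast
      have "u = x" using e mv_arc[OF mv2 e(1)] xlt by auto
      have vv: "x < v" "v \<in> S" using mv_arc[OF mv2 e(1)] \<open>u = x\<close> by auto
      have "y \<le> v" using nobetween[OF vv(2)] vv(1) by auto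
      show ?thesis
      proof (rule ccontr)
        assume nxy: "(x,y) \<notin> M2"
        then have yv: "y < v" using \<open>y \<le> v\<close> \<open>u = x\<close> e by (cases "y = v") auto
        obtain u' v' where e': "(u',v') \<in> M2" "u' = y \<or> v' = y" using mv_ex[OF mv2 xlt(5)] by blast
        have "v' = y" using e' mv_arc[OF mv2 e'(1)] xlt by auto
        have u's: "u' < y" "u' \<in> S" using mv_arc[OF mv2 e'(1)] \<open>v' = y\<close> by auto
        have "u' \<noteq> x" using nxy \<open>v' = y\<close> e'(1) by auto
        then have "u' < x" using nobetween[OF u's(2)] u's(1) by auto
        then show False using mv_nc[OF mv2 e'(1) e(1)] \<open>v' = y\<close> \<open>u = x\<close> yv xlt(1)
          by auto
      qed
    qed
    have lt: "card (S - {x,y}) < card S" using less.prems(1) xlt(4,5)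
      using card_Diff2_less[of S x y] by (simp add: Diff_insert2[symmetric])
    have "M1 - {(x,y)} = M2 - {(x,y)}"
      using less.hyps[OF lt _ mv_remove[OF mv1 xy(1)] mv_remove[OF mv2 xy2]]
        less.prems(1) by simp
    then show ?thesis using xy(1) xy2 by blast
  qed
qed



lemma mv_exists:
  "finite S \<Longrightarrow> card {s\<in>S. L s} = card {s\<in>S. \<not> L s} \<Longrightarrow>
   (\<forall>t. card {s\<in>S. s \<le> t \<and> \<not> L s} \<le> card {s\<in>S. s \<le> t \<and> L s}) \<Longrightarrow> \<exists>M. mvalid S L M"
proof (induction "card S" arbitrary: S rule: less_induct)
  case less
  note fin = less.prems(1) and bal = less.prems(2) and pre = less.prems(3)
  show ?case
  proof (cases "S = {}")
    case True
    then have "mvalid S L {}" unfolding mvalid_def by simp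
    then show ?thesis by blast
  next
    case False
    define N where "N = {s\<in>S. \<not> L s}"
    have finN: "finite N" using fin unfolding N_def by simp
    have "N \<noteq> {}"
    proof
      assume "N = {}"
      then have "card {s\<in>S. \<not> L s} = 0" unfolding N_def by (metis card.empty)
      then have "card {s\<in>S. L s} = 0" using bal by simp
      then have "{s\<in>S. L s} = {}" using fin by simp
      then show False using \<open>N = {}\<close> False unfolding N_def by blast
    qed
    define y where "y = Min N"
    have yN: "y \<in> N" unfolding y_def using finN \<open>N \<noteq> {}\<close> by simp
    have ymin: "y \<le> s" if "s \<in> N" for s unfolding y_def using finN that by simp
    have yS: "y \<in> S" "\<not> L y" using yN unfolding N_def by auto
    have "card {s\<in>S. s \<le> y \<and> \<not> L s} \<ge> 1"
    proof -
      have "y \<in> {s\<in>S. s \<le> y \<and> \<not> L s}" using yS by simp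
      moreover have "finite {s\<in>S. s \<le> y \<and> \<not> L s}" using fin by simp
      ultimately show ?thesis by (metis One_nat_def Suc_leI card_gt_0_iff empty_iff)
    qed
    then have "card {s\<in>S. s \<le> y \<and> L s} \<ge> 1" using pre by (meson order_trans)
    then have "{s\<in>S. s \<le> y \<and> L s} \<noteq> {}" by (metis card.empty not_one_le_zero)
    then obtain x0 where x0: "x0 \<in> S" "x0 \<le> y" "L x0" by blast
    define B where "B = {s\<in>S. s < y}"
    have x0B: "x0 \<in> B" unfolding B_def using x0 yS by (cases "x0 = y") auto
    have finB: "finite B" using fin unfolding B_def by simp
    define x where "x = Max B"
    have xB: "x \<in> B" unfolding x_def using finB x0B by (metis Max_in empty_iff)
    have xmax: "s \<le> x" if "s \<in> B" for s unfolding x_def using finB that by simp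
    have belowy: "L s" if "s \<in> S" "s < y" for s
    proof (rule ccontr)
      assume "\<not> L s" then have "s \<in> N" unfolding N_def using that by simp
      then show False using ymin that by force
    qed
    have xS: "x \<in> S" "x < y" "L x" using xB belowy unfolding B_def by auto
    have nob: "\<not> (x < z \<and> z < y)" if "z \<in> S" for z
      using xmax[of z] that unfolding B_def by auto
    define S' where "S' = S - {x,y}"
    have finS': "finite S'" using fin unfolding S'_def by simp
    have lt: "card S' < card S" unfolding S'_def
      using card_Diff2_less[of S x y] fin xS yS by (simp add: Diff_insert2[symmetric])
    have e1: "{s\<in>S'. L s} = {s\<in>S. L s} - {x}" unfolding S'_def using yS by auto
    have e2: "{s\<in>S'. \<not> L s} = {s\<in>S. \<not> L s} - {y}" unfolding S'_def using xS by auto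
    have bal': "card {s\<in>S'. L s} = card {s\<in>S'. \<not> L s}"
      unfolding e1 e2 using bal fin xS yS by (simp add: card_Diff_singleton)
    have pre': "card {s\<in>S'. s \<le> t \<and> \<not> L s} \<le> card {s\<in>S'. s \<le> t \<and> L s}" for t
    proof (cases "t < x")
      case True
      then have "{s\<in>S'. s \<le> t \<and> \<not> L s} = {s\<in>S. s \<le> t \<and> \<not> L s}"
        "{s\<in>S'. s \<le> t \<and> L s} = {s\<in>S. s \<le> t \<and> L s}" unfolding S'_def using xS by auto
      then show ?thesis using pre by simp
    next
      case False
      show ?thesis
      proof (cases "t < y")
        case True
        have "{s\<in>S'. s \<le> t \<and> \<not> L s} = {}" unfolding S'_def using belowy True by fastforce
        then show ?thesis by (metis card.empty le0)
      next
        case False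
        have a1: "{s\<in>S'. s \<le> t \<and> \<not> L s} = {s\<in>S. s \<le> t \<and> \<not> L s} - {y}"
          unfolding S'_def using xS by auto
        have a2: "{s\<in>S'. s \<le> t \<and> L s} = {s\<in>S. s \<le> t \<and> L s} - {x}"
          unfolding S'_def using yS by auto
        have "y \<in> {s\<in>S. s \<le> t \<and> \<not> L s}" "x \<in> {s\<in>S. s \<le> t \<and> L s}"
          using False xS yS by auto
        then show ?thesis unfolding a1 a2 using pre[rule_format, of t] fin
          by (simp add: card_Diff_singleton)
      qed
    qed
    obtain M' where M': "mvalid S' L M'"
      using less.hyps[OF lt finS' bal'] pre' by blast
    have sub': "M' \<subseteq> S' \<times> S'" using mv_parts(1)[OF M'] .
    define M where "M = insert (x,y) M'"
    have "mvalid S L M"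
      unfolding mvalid_def
    proof (intro conjI)
      show "M \<subseteq> S \<times> S" unfolding M_def using sub' xS yS unfolding S'_def by auto
      show "\<forall>(u,v)\<in>M. u<v \<and> L u \<and> \<not> L v" unfolding M_def using mv_parts(2)[OF M'] xS yS by auto
      show "\<forall>p\<in>S. \<exists>!e. e\<in>M \<and> (fst e = p \<or> snd e = p)"
      proof
        fix p assume pS: "p \<in> S"
        show "\<exists>!e. e\<in>M \<and> (fst e = p \<or> snd e = p)"
        proof (cases "p = x \<or> p = y")
          case True
          show ?thesis
          proof (rule ex1I[of _ "(x,y)"])
            show "(x,y)\<in>M \<and> (fst (x,y) = p \<or> snd (x,y) = p)" unfolding M_def using True by auto
          next
            fix e assume e: "e\<in>M \<and> (fst e = p \<or> snd e = p)"
            show "e = (x,y)"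
            proof (rule ccontr)
              assume "e \<noteq> (x,y)"
              then have "e \<in> M'" using e unfolding M_def by simp
              then have "fst e \<in> S'" "snd e \<in> S'" using sub' by auto
              then show False using e True unfolding S'_def by auto
            qed
          qed
        next
          case False
          then have pS': "p \<in> S'" unfolding S'_def using pS by simp
          from mv_parts(3)[OF M'] pS' have "\<exists>!e. e\<in>M' \<and> (fst e = p \<or> snd e = p)" by (rule bspec)
          then obtain e where e: "e\<in>M' \<and> (fst e = p \<or> snd e = p)"
            and u: "\<forall>e'. e'\<in>M' \<and> (fst e' = p \<or> snd e' = p) \<longrightarrow> e' = e" by (rule ex1E)
          show ?thesis
          proof (rule ex1I[of _ e])
            show "e\<in>M \<and> (fst e = p \<or> snd e = p)" using e unfolding M_def by simp
          next
            fix e' assume e': "e'\<in>M \<and> (fst e' = p \<or> snd e' = p)"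
            then have "e' \<noteq> (x,y)" using False by auto
            then have "e'\<in>M' \<and> (fst e' = p \<or> snd e' = p)" using e' unfolding M_def by simp
            then show "e' = e" using u by blast
          qed
        qed
      qed
      show "\<forall>(a,b)\<in>M. \<forall>(u,v)\<in>M. \<not>(a<u \<and> u<b \<and> b<v)"
      proof -
        have H: "\<not>(a<u \<and> u<b \<and> b<v)" if e1: "e1 \<in> M" and e2: "e2 \<in> M"
            and ab: "e1 = (a,b)" and uv: "e2 = (u,v)" for e1 e2 a b u v
        proof (cases "e1 = (x,y)")
          case T1: True
          show ?thesis
          proof (cases "e2 = (x,y)")
            case True then show ?thesis using T1 ab uv by auto
          next
            case False
            then have "e2 \<in> M'" using e2 unfolding M_def by simp
            then have "u \<in> S'" using sub' uv by auto
            then have "u \<in> S" "u \<noteq> x" "u \<noteq> y" unfolding S'_def by auto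
            then show ?thesis using nob[of u] T1 ab by auto
          qed
        next
          case F1: False
          then have e1': "e1 \<in> M'" using e1 unfolding M_def by simp
          show ?thesis
          proof (cases "e2 = (x,y)")
            case True
            have "b \<in> S'" using sub' e1' ab by auto
            then have "b \<in> S" "b \<noteq> x" "b \<noteq> y" unfolding S'_def by auto
            then show ?thesis using nob[of b] True ab uv by auto
          next
            case False
            then have "e2 \<in> M'" using e2 unfolding M_def by simp
            then show ?thesis using mv_nc[OF M'] e1' ab uv by blast
          qed
        qed
        then show ?thesis by fast
      qed
    qed
    then show ?thesis by blast
  qed
qed



lemma sact_len: "2 \<le> length b \<Longrightarrow> i < length b \<Longrightarrow> length (sact i b) = length b"
  unfolding sact_def by auto

lemma sact_even:
  assumes "2 \<le> length b" "i < length b"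
  shows "even (length (filter Not (sact i b))) = even (length (filter Not b))"
proof (cases "i = 0")
  case True
  obtain b0 b1 r where b: "b = b0 # b1 # r" using assms(1)
    by (metis One_nat_def Suc_1 Suc_le_length_iff)
  show ?thesis using True unfolding sact_def b by auto
next
  case False
  have "mset (b[i - 1 := b ! i, i := b ! (i - 1)]) = mset b"
    using mset_swap[of i b "i - 1"] assms False by simp
  then have "mset (filter Not (b[i - 1 := b ! i, i := b ! (i - 1)])) = mset (filter Not b)"
    by (simp add: mset_filter)
  then have "length (filter Not (b[i - 1 := b ! i, i := b ! (i - 1)])) = length (filter Not b)"
    by (metis size_mset)
  then show ?thesis using False unfolding sact_def by simp
qed

lemma wact_props:
  "set ws \<subseteq> {..<n} \<Longrightarrow> length b = n \<Longrightarrow> 2 \<le> n \<Longrightarrow>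
   length (wact b ws) = n \<and> (even (length (filter Not (wact b ws))) = even (length (filter Not b)))"
proof (induction ws arbitrary: b)
  case Nil
  then show ?case unfolding wact_def by simp
next
  case (Cons i ws)
  have i: "i < n" using Cons.prems(1) by auto
  have "wact b (i # ws) = wact (sact i b) ws" unfolding wact_def by simp
  moreover have "length (sact i b) = n" using sact_len[of b i] Cons.prems i by simp
  moreover have "even (length (filter Not (sact i b))) = even (length (filter Not b))"
    using sact_even[of b i] Cons.prems i by simp
  ultimately show ?case using Cons.IH[of "sact i b"] Cons.prems by simp
qed

lemma Pset_iff: "j \<in> Pset n \<longleftrightarrow> (1 \<le> j \<and> j \<le> 2 * int n) \<or> (- 2 * int n \<le> j \<and> j \<le> -1)"
  unfolding Pset_def by auto

lemma Pset_neg: "(- j \<in> Pset n) = (j \<in> Pset n)"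
  unfolding Pset_iff by auto

lemma Pset_fin: "finite (Pset n)" unfolding Pset_def by simp

lemma plab_neg: "j \<in> Pset n \<Longrightarrow> plab n a (- j) = (\<not> plab n a j)"
  unfolding plab_def Pset_iff by auto

lemma plab_low: "j < - int n \<Longrightarrow> plab n a j" unfolding plab_def by simp
lemma plab_high: "j > int n \<Longrightarrow> \<not> plab n a j" unfolding plab_def by simp
lemma plab_pos: "0 < j \<Longrightarrow> j \<le> int n \<Longrightarrow> plab n a j = a ! (nat j - 1)" unfolding plab_def by simp

lemma bal_P: "card {s\<in>Pset n. plab n a s} = card {s\<in>Pset n. \<not> plab n a s}"
proof -
  have "uminus ` {s\<in>Pset n. plab n a s} = {s\<in>Pset n. \<not> plab n a s}"
  proof
    show "uminus ` {s\<in>Pset n. plab n a s} \<subseteq> {s\<in>Pset n. \<not> plab n a s}"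
      using plab_neg Pset_neg by auto
    show "{s\<in>Pset n. \<not> plab n a s} \<subseteq> uminus ` {s\<in>Pset n. plab n a s}"
    proof
      fix s assume s: "s \<in> {s\<in>Pset n. \<not> plab n a s}"
      then have "- s \<in> {s\<in>Pset n. plab n a s}" using plab_neg Pset_neg by auto
      then show "s \<in> uminus ` {s\<in>Pset n. plab n a s}" by (metis image_eqI minus_minus)
    qed
  qed
  moreover have "inj_on uminus {s\<in>Pset n. plab n a s}" by (simp add: inj_on_def)
  ultimately show ?thesis by (metis card_image)
qed

lemma pre_P: "card {s\<in>Pset n. s \<le> t \<and> \<not> plab n a s} \<le> card {s\<in>Pset n. s \<le> t \<and> plab n a s}"
proof -
  define L where "L = plab n a"
  define A where "A = {s\<in>Pset n. s \<le> t \<and> \<not> L s}"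
  define B where "B = {s\<in>Pset n. s \<le> t \<and> L s}"
  define phi where "phi s = (if s > int n then (if L (s - int n) then s - int n else -(s - int n))
       else - int n - \<bar>s\<bar>)" for s
  have into: "phi s \<in> B" if s: "s \<in> A" for s
  proof (cases "s > int n")
    case True
    define k where "k = s - int n"
    have k: "1 \<le> k" "k \<le> int n" "k \<in> Pset n" using s True unfolding A_def k_def Pset_iff by auto
    show ?thesis
    proof (cases "L k")
      case True
      then show ?thesis using k s \<open>s > int n\<close> unfolding phi_def B_def A_def k_def by auto
    next
      case False
      then have "L (-k)" using plab_neg[OF k(3)] unfolding L_def by simp
      moreover have "-k \<in> Pset n" using k(3) Pset_neg by simp
      ultimately show ?thesis using False k s \<open>s > int n\<close> unfolding phi_def B_def A_def k_def by auto
    qed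
  next
    case False
    have s1: "s \<in> Pset n" "s \<le> t" "\<not> L s" using s unfolding A_def by auto
    have "\<not> s < - int n" using s1(3) plab_low unfolding L_def by blast
    then have r: "- 2 * int n \<le> - int n - \<bar>s\<bar>" "- int n - \<bar>s\<bar> \<le> -1" "- int n - \<bar>s\<bar> < - int n"
      "- int n - \<bar>s\<bar> \<le> s"
      using s1(1) False unfolding Pset_iff by auto
    then have "- int n - \<bar>s\<bar> \<in> Pset n" unfolding Pset_iff by arith
    moreover have "L (- int n - \<bar>s\<bar>)" using r(3) plab_low unfolding L_def by blast
    ultimately show ?thesis using False r(4) s1(2) unfolding phi_def B_def by auto
  qed
  have inj: "inj_on phi A"
  proof
    fix s1 s2 assume s1: "s1 \<in> A" and s2: "s2 \<in> A" and eq: "phi s1 = phi s2"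
    have p1: "s1 \<in> Pset n" "\<not> L s1" and p2: "s2 \<in> Pset n" "\<not> L s2" using s1 s2 unfolding A_def by auto
    have l1: "\<not> s1 < - int n" using p1(2) plab_low unfolding L_def by blast
    have l2: "\<not> s2 < - int n" using p2(2) plab_low unfolding L_def by blast
    show "s1 = s2"
    proof (cases "s1 > int n")
      case T1: True
      show ?thesis
      proof (cases "s2 > int n")
        case True
        then show ?thesis using T1 eq p1(1) p2(1) unfolding phi_def Pset_iff by (auto split: if_splits)
      next
        case False
        then show ?thesis using T1 eq p1(1) p2(1) unfolding phi_def Pset_iff by (auto split: if_splits)
      qed
    next
      case F1: False
      show ?thesis
      proof (cases "s2 > int n")
        case True
        then show ?thesis using F1 eq p1(1) p2(1) unfolding phi_def Pset_iff by (auto split: if_splits)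
      next
        case False
        then have "\<bar>s1\<bar> = \<bar>s2\<bar>" using F1 eq unfolding phi_def by simp
        then have "s1 = s2 \<or> s1 = - s2" by auto
        moreover have "s1 \<noteq> - s2" using plab_neg[OF p2(1)] p1(2) p2(2) unfolding L_def by auto
        ultimately show ?thesis by simp
      qed
    qed
  qed
  have "finite B" unfolding B_def using Pset_fin by simp
  then have "card A \<le> card B" using card_inj_on_le[OF inj] into by blast
  then show ?thesis unfolding A_def B_def L_def .
qed

lemma mv_reflect:
  assumes mv: "mvalid S L M" and sym: "\<And>j. (- j \<in> S) = (j \<in> S)"
    and anti: "\<And>j. j \<in> S \<Longrightarrow> L (- j) = (\<not> L j)"
  shows "mvalid S L ((\<lambda>(x,y). (-y,-x)) ` M)"
  unfolding mvalid_def
proof (intro conjI)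
  let ?R = "(\<lambda>(x,y). (-y,-x)) ` M"
  show "?R \<subseteq> S \<times> S"
  proof
    fix e assume "e \<in> ?R"
    then obtain x y where xy: "(x,y) \<in> M" "e = (-y,-x)" by auto
    then show "e \<in> S \<times> S" using mv_arc[OF mv xy(1)] sym by auto
  qed
  show "\<forall>(u,v)\<in>?R. u<v \<and> L u \<and> \<not> L v"
  proof
    fix e assume "e \<in> ?R"
    then obtain x y where xy: "(x,y) \<in> M" "e = (-y,-x)" by auto
    then show "case e of (u,v) \<Rightarrow> u<v \<and> L u \<and> \<not> L v"
      using mv_arc[OF mv xy(1)] anti[of x] anti[of y] by auto
  qed
  show "\<forall>p\<in>S. \<exists>!e. e\<in>?R \<and> (fst e = p \<or> snd e = p)"
  proof
    fix p assume pS: "p \<in> S"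
    then have mp: "- p \<in> S" using sym by simp
    from mv_parts(3)[OF mv] mp have "\<exists>!e. e\<in>M \<and> (fst e = - p \<or> snd e = - p)" by (rule bspec)
    then obtain e where e: "e\<in>M \<and> (fst e = - p \<or> snd e = - p)"
      and u: "\<forall>e'. e'\<in>M \<and> (fst e' = - p \<or> snd e' = - p) \<longrightarrow> e' = e" by (rule ex1E)
    obtain x y where exy: "e = (x,y)" by (cases e)
    show "\<exists>!e. e\<in>?R \<and> (fst e = p \<or> snd e = p)"
    proof (rule ex1I[of _ "(-y,-x)"])
      show "(-y,-x)\<in>?R \<and> (fst (-y,-x) = p \<or> snd (-y,-x) = p)"
        using e exy by force
    next
      fix e' assume e': "e'\<in>?R \<and> (fst e' = p \<or> snd e' = p)"
      then obtain x' y' where xy': "(x',y') \<in> M" "e' = (-y',-x')" by auto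
      then have "(x',y')\<in>M \<and> (fst (x',y') = - p \<or> snd (x',y') = - p)" using e' by auto
      then have "(x',y') = e" using u by blast
      then show "e' = (-y,-x)" using xy' exy by simp
    qed
  qed
  show "\<forall>(a,b)\<in>?R. \<forall>(u,v)\<in>?R. \<not>(a<u \<and> u<b \<and> b<v)"
  proof -
    have H: "\<not>(a<u \<and> u<b \<and> b<v)" if h1: "(a,b) \<in> ?R" and h2: "(u,v) \<in> ?R" for a b u v
    proof -
      obtain x y where xy: "(x,y) \<in> M" "(a,b) = (-y,-x)" using h1 by fastforce
      obtain x' y' where xy': "(x',y') \<in> M" "(u,v) = (-y',-x')" using h2 by fastforce
      show ?thesis using mv_nc[OF mv xy'(1) xy(1)] xy(2) xy'(2) by auto
    qed
    then show ?thesis by fast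
  qed
qed



lemma pair_count:
  fixes R :: "int set" and A :: "(int \<times> int) set" and f :: "int \<Rightarrow> bool"
  assumes A1: "\<forall>p\<in>R. \<exists>!e. e\<in>A \<and> (fst e = p \<or> snd e = p)"
    and A2: "\<forall>e\<in>A. fst e \<in> R \<and> snd e \<in> R"
    and A3: "\<forall>e\<in>A. f (fst e) \<noteq> f (snd e)"
  shows "card {p\<in>R. f p} = card A"
proof -
  define g where "g e = (if f (fst e) then fst e else snd e)" for e :: "int \<times> int"
  have "bij_betw g A {p\<in>R. f p}"
    unfolding bij_betw_def
  proof (intro conjI)
    show "inj_on g A"
    proof
      fix e1 e2 assume e1: "e1 \<in> A" and e2: "e2 \<in> A" and eq: "g e1 = g e2"
      define p where "p = g e1"
      have t1: "fst e1 = p \<or> snd e1 = p" unfolding p_def g_def by simp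
      have t2: "fst e2 = p \<or> snd e2 = p"
      proof -
        have "p = g e2" using eq p_def by simp
        then show ?thesis unfolding g_def by auto
      qed
      have "p \<in> R" using A2 e1 unfolding p_def g_def by auto
      then have "\<exists>!e. e\<in>A \<and> (fst e = p \<or> snd e = p)" using A1 by (rule bspec[rotated])
      then show "e1 = e2" using e1 e2 t1 t2 by blast
    qed
    show "g ` A = {p\<in>R. f p}"
    proof
      show "g ` A \<subseteq> {p\<in>R. f p}" using A2 A3 unfolding g_def by auto
      show "{p\<in>R. f p} \<subseteq> g ` A"
      proof
        fix p assume p: "p \<in> {p\<in>R. f p}"
        then have "\<exists>!e. e\<in>A \<and> (fst e = p \<or> snd e = p)" using A1 by blast
        then obtain e where e: "e\<in>A" "fst e = p \<or> snd e = p" by blast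
        have "g e = p" using e p A3 unfolding g_def by auto
        then show "p \<in> g ` A" using e(1) by blast
      qed
    qed
  qed
  then show ?thesis by (metis bij_betw_same_card)
qed

lemma pairs_even:
  "(\<And>j. 2*j+1 < length xs \<Longrightarrow> f (xs!(2*j)) = f (xs!(2*j+1))) \<Longrightarrow> even (length xs)
   \<Longrightarrow> even (length (filter f xs))"
proof (induction xs rule: induct_list012)
  case 1 then show ?case by simp
next
  case (2 x) then show ?case by simp
next
  case (3 x y zs)
  have h: "f (zs!(2*j)) = f (zs!(2*j+1))" if "2*j+1 < length zs" for j
    using "3.prems"(1)[of "Suc j"] that by simp
  have "even (length (filter f zs))" using "3.IH"(1) h "3.prems"(2) by simp
  moreover have "f x = f y" using "3.prems"(1)[of 0] by simp
  ultimately show ?case by simp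
qed

lemma card_split: "finite R \<Longrightarrow> card R = card {p\<in>R. f p} + card {p\<in>R. \<not> f p}"
proof -
  assume "finite R"
  moreover have "R = {p\<in>R. f p} \<union> {p\<in>R. \<not> f p}" by auto
  ultimately show ?thesis by (metis (no_types, lifting) card_Un_disjoint disjoint_iff
      finite_Un mem_Collect_eq)
qed

theorem lemma3p5:
  fixes n :: nat and w :: "int \<Rightarrow> int" and ws :: "nat list" and \<mu> :: "int \<Rightarrow> bool"
  assumes "n \<ge> 4"
    and "w \<in> Wp_reps n"
    and "set ws \<subseteq> {..<n}" and "welt ws = w"
    and "\<forall>j \<in> Pset n. \<mu> (- j) = (\<not> \<mu> j)"
    and "\<forall>j \<in> {int n + 1 .. 2 * int n}. \<mu> j"
    and "\<forall>(x, y) \<in> cups n (wact (replicate n True) ws). \<mu> x \<noteq> \<mu> y"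
  shows "even (card {j \<in> {1 .. int n}. \<mu> j})"
proof -
  define a where "a = wact (replicate n True) ws"
  have wp: "length a = n" "even (length (filter Not a))"
    using wact_props[OF assms(3), of "replicate n True"] assms(1) unfolding a_def by auto
  define L where "L = plab n a"
  obtain M0 where M0: "mvalid (Pset n) L M0"
    using mv_exists[OF Pset_fin bal_P] pre_P unfolding L_def by blast
  have ex1: "\<exists>!M. is_M n a M"
  proof (rule ex1I[of _ M0])
    show "is_M n a M0" using M0 unfolding isM_mvalid L_def .
    fix M' assume "is_M n a M'"
    then show "M' = M0" using mv_unique[OF Pset_fin _ M0] unfolding isM_mvalid L_def by blast
  qed
  define M where "M = Mdiag n a"
  have mv: "mvalid (Pset n) L M"
    using theI'[OF ex1] unfolding M_def Mdiag_def isM_mvalid L_def .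
  have symM: "(-y,-x) \<in> M" if "(x,y) \<in> M" for x y
  proof -
    have "mvalid (Pset n) L ((\<lambda>(x,y). (-y,-x)) ` M)"
      by (rule mv_reflect[OF mv]) (simp_all add: Pset_neg plab_neg L_def)
    then have "(\<lambda>(x,y). (-y,-x)) ` M = M" using mv_unique[OF Pset_fin _ mv] by blast
    then show ?thesis using that by force
  qed
  have cross: "x = - y" if xy: "(x,y) \<in> M" "x < 0" "0 < y" for x y
  proof (rule ccontr)
    assume ne: "x \<noteq> - y"
    have s: "(-y,-x) \<in> M" using symM[OF xy(1)] .
    show False
    proof (cases "x < - y")
      case True
      then show False using mv_nc[OF mv xy(1) s] xy by auto
    next
      case False
      then show False using mv_nc[OF mv s xy(1)] xy ne by auto
    qed
  qed
  define Ys where "Ys = {y. \<exists>x. (x, y) \<in> M \<and> x < 0 \<and> 0 < y}"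
  have Ychar: "y \<in> Ys \<longleftrightarrow> 0 < y \<and> (-y,y) \<in> M" for y
    unfolding Ys_def using cross by force
  define Pos where "Pos = {1 .. 2 * int n}"
  have PosP: "Pos \<subseteq> Pset n" unfolding Pos_def Pset_def by auto
  have finPos: "finite Pos" unfolding Pos_def by simp
  have YsP: "Ys \<subseteq> Pos"
  proof
    fix y assume "y \<in> Ys"
    then have "0 < y" "(-y,y) \<in> M" using Ychar by auto
    then show "y \<in> Pos" using mv_arc[OF mv \<open>(-y,y) \<in> M\<close>] unfolding Pos_def Pset_iff by auto
  qed
  have finYs: "finite Ys" using finite_subset[OF YsP finPos] .
  have Yneg: "\<not> L y" if "y \<in> Ys" for y using that Ychar mv_arc[OF mv] by blast
  define Y where "Y = crossY n a"
  have Y: "Y = sorted_list_of_set Ys" unfolding Y_def crossY_def Ys_def M_def by simp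
  have setY: "set Y = Ys" and distY: "distinct Y" and lenY: "length Y = card Ys"
    using Y finYs by auto
  define R where "R = Pos - Ys"
  define A where "A = {e \<in> M. 0 < fst e}"
  have finR: "finite R" unfolding R_def using finPos by simp
  have A1: "\<forall>p\<in>R. \<exists>!e. e\<in>A \<and> (fst e = p \<or> snd e = p)"
  proof
    fix p assume p: "p \<in> R"
    then have pP: "p \<in> Pset n" "p \<notin> Ys" "0 < p" using PosP unfolding R_def Pos_def by auto
    from mv_parts(3)[OF mv] pP(1) have "\<exists>!e. e\<in>M \<and> (fst e = p \<or> snd e = p)" by (rule bspec)
    then obtain e where e: "e\<in>M \<and> (fst e = p \<or> snd e = p)"
      and u: "\<forall>e'. e'\<in>M \<and> (fst e' = p \<or> snd e' = p) \<longrightarrow> e' = e" by (rule ex1E)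
    obtain x y where exy: "e = (x,y)" by (cases e)
    have arc: "x < y" "x \<in> Pset n" using mv_arc[OF mv, of x y] e exy by auto
    have "0 < x"
    proof (cases "x = p")
      case True then show ?thesis using pP by simp
    next
      case False
      then have "y = p" using e exy by auto
      have "x \<noteq> 0" using arc(2) unfolding Pset_iff by auto
      moreover have "\<not> x < 0"
      proof
        assume "x < 0"
        then have "p \<in> Ys" unfolding Ys_def using e exy \<open>y = p\<close> pP(3) by auto
        then show False using pP(2) by simp
      qed
      ultimately show ?thesis by simp
    qed
    then have eA: "e \<in> A" unfolding A_def using e exy by simp
    show "\<exists>!e. e\<in>A \<and> (fst e = p \<or> snd e = p)"
    proof (rule ex1I[of _ e])
      show "e\<in>A \<and> (fst e = p \<or> snd e = p)" using eA e by simp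
      fix e' assume "e'\<in>A \<and> (fst e' = p \<or> snd e' = p)"
      then have "e'\<in>M \<and> (fst e' = p \<or> snd e' = p)" unfolding A_def by simp
      then show "e' = e" using u by blast
    qed
  qed
  have A2: "\<forall>e\<in>A. fst e \<in> R \<and> snd e \<in> R"
  proof
    fix e assume eA: "e \<in> A"
    obtain x y where exy: "e = (x,y)" by (cases e)
    have xy: "(x,y) \<in> M" "0 < x" using eA exy unfolding A_def by auto
    have arc: "x < y" "L x" "\<not> L y" "x \<in> Pset n" "y \<in> Pset n" using mv_arc[OF mv xy(1)] by auto
    have "x \<in> Pos" "y \<in> Pos" using arc xy(2) unfolding Pos_def Pset_iff by auto
    moreover have "x \<notin> Ys" using Yneg arc(2) by blast
    moreover have "y \<notin> Ys"
    proof
      assume "y \<in> Ys"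
      then have m: "(-y,y) \<in> M" using Ychar by simp
      have "(x,y) = (-y,y)" by (rule mv_uniq[OF mv xy(1) m, of y]) simp_all
      then show False using xy(2) arc(1) by simp
    qed
    ultimately show "fst e \<in> R \<and> snd e \<in> R" unfolding R_def exy by simp
  qed
  have A3L: "\<forall>e\<in>A. L (fst e) \<noteq> L (snd e)"
  proof
    fix e assume "e \<in> A"
    then have "e \<in> M" unfolding A_def by simp
    then show "L (fst e) \<noteq> L (snd e)" using mv_arc[OF mv, of "fst e" "snd e"] by simp
  qed
  have cupsA: "e \<in> cups n a" if "e \<in> A" for e
  proof -
    have "e \<in> M" "\<not> (fst e < 0 \<and> 0 < snd e)" using that unfolding A_def by auto
    then show ?thesis unfolding cups_def Let_def M_def by (cases e) auto
  qed
  have mucups: "\<mu> (fst e) \<noteq> \<mu> (snd e)" if "e \<in> cups n a" for e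
    using assms(7) that unfolding a_def by (cases e) auto
  have A3m: "\<forall>e\<in>A. \<mu> (fst e) \<noteq> \<mu> (snd e)" using cupsA mucups by blast
  have cL1: "card {p\<in>R. L p} = card A" by (rule pair_count[OF A1 A2 A3L])
  have cL2: "card {p\<in>R. \<not> L p} = card A" by (rule pair_count[OF A1 A2]) (use A3L in auto)
  have cm1: "card {p\<in>R. \<mu> p} = card A" by (rule pair_count[OF A1 A2 A3m])
  have cm2: "card {p\<in>R. \<not> \<mu> p} = card A" by (rule pair_count[OF A1 A2]) (use A3m in auto)
  have cR: "card R = 2 * card A" using card_split[OF finR, of L] cL1 cL2 by simp
  have cR2: "card R = card Pos - card Ys" unfolding R_def using card_Diff_subset[OF finYs YsP] .
  have cPos: "card Pos = 2 * n" unfolding Pos_def by simp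
  define q where "q = length (filter (\<lambda>x. x) a)"
  have qn: "q + length (filter Not a) = n" unfolding q_def
    using sum_length_filter_compl[of "\<lambda>x. x" a] wp(1) by simp
  have LPos: "{p\<in>Pos. L p} = {p\<in>R. L p}" unfolding R_def using Yneg by auto
  have LPos2: "{p\<in>Pos. L p} = (\<lambda>i. int i + 1) ` {i. i < n \<and> a ! i}"
  proof
    show "{p\<in>Pos. L p} \<subseteq> (\<lambda>i. int i + 1) ` {i. i < n \<and> a ! i}"
    proof
      fix p assume p: "p \<in> {p\<in>Pos. L p}"
      then have "p \<le> int n" using plab_high[of n p a] unfolding L_def by force
      moreover have "0 < p" using p unfolding Pos_def by auto
      ultimately have "a ! (nat p - 1)" "nat p - 1 < n" "p = int (nat p - 1) + 1"
        using p plab_pos[of p n a] unfolding L_def by auto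
      then show "p \<in> (\<lambda>i. int i + 1) ` {i. i < n \<and> a ! i}" by blast
    qed
    show "(\<lambda>i. int i + 1) ` {i. i < n \<and> a ! i} \<subseteq> {p\<in>Pos. L p}"
    proof
      fix p assume "p \<in> (\<lambda>i. int i + 1) ` {i. i < n \<and> a ! i}"
      then obtain i where i: "i < n" "a ! i" "p = int i + 1" by blast
      have "p = int (Suc i)" using i(3) by simp
      then have "nat p = Suc i" by simp
      then have "nat p - 1 = i" by simp
      then have "L p" using plab_pos[of p n a] i unfolding L_def by simp
      then show "p \<in> {p\<in>Pos. L p}" using i unfolding Pos_def by auto
    qed
  qed
  have "card {p\<in>Pos. L p} = card {i. i < n \<and> a ! i}"
    unfolding LPos2 by (rule card_image) (simp add: inj_on_def)
  also have "\<dots> = q" unfolding q_def length_filter_conv_card wp(1) by simp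
  finally have cLq: "card {p\<in>R. L p} = q" using LPos by simp
  have cYs: "card Ys = 2 * length (filter Not a)"
    using cR cR2 cPos cL1 cLq qn card_mono[OF finPos YsP] by linarith
  have pairY: "\<mu> (Y!(2*j)) = \<mu> (Y!(2*j+1))" if j: "2*j+1 < length Y" for j
  proof -
    have "(- (Y ! (2 * j + 1)), Y ! (2 * j)) \<in> cups n a"
      unfolding cups_def Let_def Y_def using j[unfolded Y_def] by blast
    then have "\<mu> (- (Y ! (2 * j + 1))) \<noteq> \<mu> (Y ! (2 * j))" using mucups by fastforce
    moreover have "Y ! (2*j+1) \<in> Pset n" using j setY YsP PosP by (metis nth_mem subsetD)
    ultimately show ?thesis using assms(5) by auto
  qed
  have evY: "even (length (filter \<mu> Y))"
    by (rule pairs_even) (use pairY lenY cYs in auto)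
  have cYm: "card {y\<in>Ys. \<mu> y} = length (filter \<mu> Y)"
    using distinct_length_filter[OF distY, of \<mu>] setY by (simp add: Collect_conj_eq Int_commute)
  have cPm: "card {p\<in>Pos. \<mu> p} = card {p\<in>R. \<mu> p} + card {y\<in>Ys. \<mu> y}"
  proof -
    have "{p\<in>Pos. \<mu> p} = {p\<in>R. \<mu> p} \<union> {y\<in>Ys. \<mu> y}" unfolding R_def using YsP by auto
    moreover have "{p\<in>R. \<mu> p} \<inter> {y\<in>Ys. \<mu> y} = {}" unfolding R_def by auto
    ultimately show ?thesis using finR finYs by (simp add: card_Un_disjoint)
  qed
  have cPm2: "card {p\<in>Pos. \<mu> p} = card {j \<in> {1 .. int n}. \<mu> j} + n"
  proof -
    have "{p\<in>Pos. \<mu> p} = {j \<in> {1 .. int n}. \<mu> j} \<union> {int n + 1 .. 2 * int n}"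
      unfolding Pos_def using assms(6) by auto
    moreover have "{j \<in> {1 .. int n}. \<mu> j} \<inter> {int n + 1 .. 2 * int n} = {}" by auto
    moreover have "finite {j \<in> {1 .. int n}. \<mu> j}" by (rule finite_subset[of _ "{1 .. int n}"]) auto
    ultimately show ?thesis
      using card_Un_disjoint[of "{j \<in> {1 .. int n}. \<mu> j}" "{int n + 1 .. 2 * int n}"] by simp
  qed
  have "card {j \<in> {1 .. int n}. \<mu> j} + n = q + length (filter \<mu> Y)"
    using cPm cPm2 cm1 cL1 cLq cYm by simp
  moreover obtain k1 where "length (filter Not a) = 2 * k1" using wp(2) by (elim evenE)
  moreover obtain k2 where "length (filter \<mu> Y) = 2 * k2" using evY by (elim evenE)
  ultimately have "card {j \<in> {1 .. int n}. \<mu> j} = 2 * (k2 - k1)" using qn by linarith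
  then show ?thesis by simp
qed


end
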